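(* Let $n\ge2$ and $\mathsf u\in\mathcal S_n$. Arrange the $n(n-1)$ positions of $\bm\lambda_n$ in an array with $n$ rows and $n-1$ columns, position $j$ lying in row $\lceil j/(n-1)\rceil$ and column $((j-1)\bmod (n-1))+1$. Then each of the $n-1$ columns contains exactly one negative skip of $\mathsf u$, and each row except the last (i.e. each of rows $1,\dots,n-1$) contains exactly one negative skip of $\mathsf u$.
   Context: $\widetilde S_n$ is the group, under composition $(vw)(k)=v(w(k))$, of bijections $w:\mathbb Z\to\mathbb Z$ with $w(i+n)=w(i)+n$ and $\sum_{i=1}^n w(i)=\binom{n+1}2$. For $i\not\equiv j\pmod n$, $(\!(i,j)\!)$ swaps $i+kn$ and $j+kn$ for all $k$; $(\!(i,j)\!)=(\!(j,i)\!)=(\!(i+kn,j+kn)\!)$; $s_i=(\!(i,i+1)\!)$, $i\in\{0,\dots,n-1\}$. "$i\bmod n$" is the representative of $i$ modulo $n$ in $\{1,\dots,n\}$. $\bm\lambda_n$ is the word $[s_0,\dots,s_{n-1}]$ repeated $n-1$ times with $j$-th letter $\sigma_j=s_{(j-1)\bmod n}$ (index in $\{0,\dots,n-1\}$). A subword is $\mathsf u=[u_1,\dots,u_{n(n-1)}]$ with $u_j\in\{\sigma_j,e\}$; $j$ is a skip if $u_j=e$. $u_{(j)}=u_1\cdots u_j$, $u_{(0)}=e$. $\mathcal S_n$ is the set of subwords with exactly $2n-2$ skips and product $e$. For a skip $j$, its reflection is $t_j=u_{(j-1)}\sigma_ju_{(j-1)}^{-1}$. The skip $j$ is negative if, writing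 $t_j=(\!(a,b)\!)$ with integers $a<b$, one has $1\le (b\bmod n)<(a\bmod n)\le n$; otherwise it is positive. *)

theory Defs
  imports Complex_Main
begin

text \<open>Affine permutations are represented as functions int => int, with product
  (v w)(k) = v (w k), i.e. function composition.\<close>

definition aff_perm :: "nat \<Rightarrow> (int \<Rightarrow> int) \<Rightarrow> bool" where
  "aff_perm n w \<longleftrightarrow> bij w \<and> (\<forall>i. w (i + int n) = w i + int n)
     \<and> (\<Sum>i=1..int n. w i) = int n * (int n + 1) div 2"

definition modrep :: "nat \<Rightarrow> int \<Rightarrow> int" where
  "modrep n i = (i - 1) mod int n + 1"

text \<open>The affine transposition ((a,b)) (for a, b not congruent mod n):
  swaps a + kn and b + kn for all k.\<close>
definition aff_transp :: "nat \<Rightarrow> int \<Rightarrow> int \<Rightarrow> int \<Rightarrow> int" where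
  "aff_transp n a b = (\<lambda>k. if k mod int n = a mod int n then k - a + b
                          else if k mod int n = b mod int n then k - b + a else k)"

definition sref :: "nat \<Rightarrow> int \<Rightarrow> int \<Rightarrow> int" where
  "sref n i = aff_transp n i (i + 1)"

text \<open>j-th letter of lambda_n (j >= 1): sigma_j = s_{(j-1) mod n}, index in {0..n-1}.\<close>
definition sigma :: "nat \<Rightarrow> nat \<Rightarrow> int \<Rightarrow> int" where
  "sigma n j = sref n (int ((j - 1) mod n))"

text \<open>A subword of lambda_n is encoded by its set K of skips (positions j in
  {1..n(n-1)} with u_j = e); the other letters are u_j = sigma_j.\<close>
definition letter :: "nat \<Rightarrow> nat set \<Rightarrow> nat \<Rightarrow> int \<Rightarrow> int" where
  "letter n K j = (if j \<in> K then id else sigma n j)"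

fun prefprod :: "nat \<Rightarrow> nat set \<Rightarrow> nat \<Rightarrow> int \<Rightarrow> int" where
  "prefprod n K 0 = id"
| "prefprod n K (Suc j) = prefprod n K j \<circ> letter n K (Suc j)"

definition in_Sn :: "nat \<Rightarrow> nat set \<Rightarrow> bool" where
  "in_Sn n K \<longleftrightarrow> K \<subseteq> {1..n * (n - 1)} \<and> card K = 2 * n - 2
     \<and> prefprod n K (n * (n - 1)) = id"

definition skip_refl :: "nat \<Rightarrow> nat set \<Rightarrow> nat \<Rightarrow> int \<Rightarrow> int" where
  "skip_refl n K j = prefprod n K (j - 1) \<circ> sigma n j \<circ> inv (prefprod n K (j - 1))"

definition neg_skip :: "nat \<Rightarrow> nat set \<Rightarrow> nat \<Rightarrow> bool" where
  "neg_skip n K j \<longleftrightarrow> j \<in> K \<and>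
     (\<exists>a b. a < b \<and> a mod int n \<noteq> b mod int n \<and> skip_refl n K j = aff_transp n a b
        \<and> 1 \<le> modrep n b \<and> modrep n b < modrep n a \<and> modrep n a \<le> int n)"

definition row_of :: "nat \<Rightarrow> nat \<Rightarrow> nat" where
  "row_of n j = nat \<lceil>real j / real (n - 1)\<rceil>"

definition col_of :: "nat \<Rightarrow> nat \<Rightarrow> nat" where
  "col_of n j = (j - 1) mod (n - 1) + 1"

end

theory Submission
  imports Defs
begin

lemma at_per: "aff_transp n a b (k + int n) = aff_transp n a b k + int n"
  unfolding aff_transp_def by auto

lemma at_shift: "aff_transp n (a + int n * q) (b + int n * q) = aff_transp n a b"
  unfolding aff_transp_def by (auto simp: fun_eq_iff)

lemma at_invol:
  assumes "a mod int n \<noteq> b mod int n"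
  shows "aff_transp n a b (aff_transp n a b k) = k"
  using assms unfolding aff_transp_def
  apply (auto simp: mod_eq_dvd_iff)
  by (metis (no_types, opaque_lifting) dvd_diff diff_diff_eq2 add_diff_eq diff_add_cancel mult_2 diff_diff_eq dvd_minus_iff minus_diff_eq)

lemma at_bij:
  assumes "a mod int n \<noteq> b mod int n"
  shows "bij (aff_transp n a b)"
  by (metis assms at_invol involuntory_imp_bij)

lemma per_mult:
  fixes f :: "int \<Rightarrow> int"
  assumes "\<And>k. f (k + m) = f k + m"
  shows "f (k + m * q) = f k + m * q"
proof -
  have nat: "f (k + m * int q') = f k + m * int q'" for k and q' :: nat
  proof (induction q' arbitrary: k)
    case (Suc q')
    have "f (k + m * int (Suc q')) = f ((k + m) + m * int q')" by (simp add: algebra_simps)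
    also have "\<dots> = f (k + m) + m * int q'" by (rule Suc)
    finally show ?case by (simp add: assms algebra_simps)
  qed simp
  show ?thesis
  proof (cases "q \<ge> 0")
    case True then show ?thesis using nat[of k "nat q"] by simp
  next
    case False
    have "f k = f ((k + m * q) + m * int (nat (-q)))" using False by simp
    also have "\<dots> = f (k + m*q) + m * int (nat (-q))" by (rule nat)
    finally show ?thesis using False by simp
  qed
qed

lemma ndvd: "0 < x \<Longrightarrow> x < int n \<Longrightarrow> \<not> int n dvd x"
  by (simp add: zdvd_not_zless)

locale S =
  fixes n :: nat and K :: "nat set"
  assumes n2: "n \<ge> 2" and inS: "in_Sn n K"
begin

abbreviation U where "U t \<equiv> prefprod n K t"

lemma i_ne: "(i::int) mod int n \<noteq> (i + 1) mod int n"
proof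
  assume "i mod int n = (i + 1) mod int n"
  then have "int n dvd 1" by (simp add: mod_eq_dvd_iff)
  then show False using n2 by simp
qed

lemma sigma_eq: "sigma n (Suc t) = aff_transp n (int (t mod n)) (int (t mod n) + 1)"
  unfolding sigma_def sref_def by simp

lemma letter_per: "letter n K j (k + int n) = letter n K j k + int n"
  unfolding letter_def sigma_def sref_def using at_per by auto

lemma letter_bij: "bij (letter n K j)"
  unfolding letter_def sigma_def sref_def using at_bij i_ne by auto

lemma U_per: "U t (k + int n) = U t k + int n"
  by (induction t arbitrary: k) (auto simp: letter_per)

lemma U_perm: "U t (k + int n * q) = U t k + int n * q"
  by (rule per_mult) (rule U_per)

lemma U_bij: "bij (U t)"
proof (induction t)
  case 0 then show ?case by (simp add: bij_id[unfolded id_def])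
next
  case (Suc t) then show ?case
    using bij_comp[OF letter_bij[of "Suc t"] Suc] by (simp only: prefprod.simps)
qed

lemma U_res:
  assumes "U t x mod int n = U t y mod int n"
  shows "x mod int n = y mod int n"
proof -
  define q where "q = (U t x - U t y) div int n"
  have "int n dvd U t x - U t y" using assms by (simp add: mod_eq_dvd_iff)
  then have "U t x = U t y + int n * q" unfolding q_def by simp
  also have "\<dots> = U t (y + int n * q)" by (simp add: U_perm)
  finally have "x = y + int n * q" using U_bij[of t] by (simp add: bij_def inj_eq)
  then show ?thesis by simp
qed

lemma U_skip: "Suc t \<in> K \<Longrightarrow> U (Suc t) = U t"
  by (simp add: letter_def)

lemma U_ns: "Suc t \<notin> K \<Longrightarrow> U (Suc t) k = U t (aff_transp n (int (t mod n)) (int (t mod n) + 1) k)"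
  by (simp add: letter_def sigma_eq)

lemma ns1:
  assumes "Suc t \<notin> K" shows "U (Suc t) (int t + 1) = U t (int t)"
proof -
  have a: "(int t + 1) mod int n \<noteq> int (t mod n) mod int n"
    using i_ne[of "int t"] by (simp add: of_nat_mod)
  have b: "(int t + 1) mod int n = (int (t mod n) + 1) mod int n"
    by (simp add: of_nat_mod mod_simps)
  show ?thesis unfolding U_ns[OF assms(1)] using a b by (simp add: aff_transp_def)
qed

lemma ns2:
  assumes "Suc t \<notin> K" shows "U (Suc t) (int t + int n) = U t (int t + 1) + int n"
proof -
  have a: "(int t + int n) mod int n = int (t mod n) mod int n"
    by (simp add: of_nat_mod)
  have "U (Suc t) (int t + int n) = U t (int t + int n + 1)"
    unfolding U_ns[OF assms(1)] using a by (simp add: aff_transp_def add.assoc)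
  also have "\<dots> = U t (int t + 1) + int n" using U_per[of t "int t + 1"] by (simp add: algebra_simps)
  finally show ?thesis .
qed

lemma ns3:
  assumes "Suc t \<notin> K" "int t + 2 \<le> p" "p \<le> int t + int n - 1"
  shows "U (Suc t) p = U t p"
proof -
  have a: "p mod int n \<noteq> int (t mod n) mod int n"
  proof
    assume "p mod int n = int (t mod n) mod int n"
    then have "int n dvd p - int t" by (simp add: of_nat_mod mod_eq_dvd_iff)
    then show False using ndvd[of "p - int t" n] assms by simp
  qed
  have b: "p mod int n \<noteq> (int (t mod n) + 1) mod int n"
  proof
    assume "p mod int n = (int (t mod n) + 1) mod int n"
    then have "p mod int n = (int t + 1) mod int n" by (simp add: of_nat_mod mod_simps)
    then have "int n dvd p - (int t + 1)" by (simp add: mod_eq_dvd_iff)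
    then show False using ndvd[of "p - (int t + 1)" n] assms by simp
  qed
  show ?thesis unfolding U_ns[OF assms(1)] using a b by (simp add: aff_transp_def)
qed

end

lemma res_iff:
  fixes u :: "int \<Rightarrow> int"
  assumes "bij u" "\<And>k. u (k + int n) = u k + int n"
  shows "(u x mod int n = u y mod int n) \<longleftrightarrow> (x mod int n = y mod int n)"
proof
  have pm: "u (k + int n * q) = u k + int n * q" for k q by (rule per_mult) (rule assms(2))
  assume h: "u x mod int n = u y mod int n"
  define q where "q = (u x - u y) div int n"
  have "int n dvd u x - u y" using h by (simp add: mod_eq_dvd_iff)
  then have "u x = u y + int n * q" unfolding q_def by simp
  also have "\<dots> = u (y + int n * q)" by (simp add: pm)
  finally have "x = y + int n * q" using assms(1) by (simp add: bij_def inj_eq)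
  then show "x mod int n = y mod int n" by simp
next
  have pm: "u (k + int n * q) = u k + int n * q" for k q by (rule per_mult) (rule assms(2))
  assume h: "x mod int n = y mod int n"
  define q where "q = (x - y) div int n"
  have "int n dvd x - y" using h by (simp add: mod_eq_dvd_iff)
  then have "x = y + int n * q" unfolding q_def by simp
  then have "u x = u y + int n * q" by (simp add: pm)
  then show "u x mod int n = u y mod int n" by simp
qed

lemma conj_at:
  fixes u :: "int \<Rightarrow> int"
  assumes "bij u" "\<And>k. u (k + int n) = u k + int n" "a mod int n \<noteq> b mod int n"
  shows "u \<circ> aff_transp n a b \<circ> inv u = aff_transp n (u a) (u b)"
proof
  fix k
  have pm: "u (k + int n * q) = u k + int n * q" for k q by (rule per_mult) (rule assms(2))
  define m where "m = inv u k"
  have um: "u m = k" unfolding m_def using surj_f_inv_f[OF bij_is_surj[OF assms(1)]] by simp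
  have ra: "(k mod int n = u a mod int n) \<longleftrightarrow> (m mod int n = a mod int n)"
    using res_iff[OF assms(1,2), of m a] um by simp
  have rb: "(k mod int n = u b mod int n) \<longleftrightarrow> (m mod int n = b mod int n)"
    using res_iff[OF assms(1,2), of m b] um by simp
  have lhs: "(u \<circ> aff_transp n a b \<circ> inv u) k = u (aff_transp n a b m)" by (simp add: m_def)
  have "u (aff_transp n a b m) = aff_transp n (u a) (u b) k"
  proof (cases "m mod int n = a mod int n")
    case True
    define q where "q = (m - a) div int n"
    have "int n dvd m - a" using True by (simp add: mod_eq_dvd_iff)
    then have mq: "m = a + int n * q" unfolding q_def by simp
    have e1: "aff_transp n a b m = m - a + b" using True unfolding aff_transp_def by simp
    have e2: "aff_transp n (u a) (u b) k = k - u a + u b" using True ra unfolding aff_transp_def by simp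
    have "u (m - a + b) = u b + int n * q" using pm[of b q] mq by (simp add: algebra_simps)
    moreover have "k = u a + int n * q" using um mq pm[of a q] by simp
    ultimately show ?thesis using e1 e2 by simp
  next
    case F: False
    show ?thesis
    proof (cases "m mod int n = b mod int n")
      case True
      define q where "q = (m - b) div int n"
      have "int n dvd m - b" using True by (simp add: mod_eq_dvd_iff)
      then have mq: "m = b + int n * q" unfolding q_def by simp
      have e1: "aff_transp n a b m = m - b + a" using True F unfolding aff_transp_def by simp
      have e2: "aff_transp n (u a) (u b) k = k - u b + u a" using True F ra rb unfolding aff_transp_def by simp
      have "u (m - b + a) = u a + int n * q" using pm[of a q] mq by (simp add: algebra_simps)
      moreover have "k = u b + int n * q" using um mq pm[of b q] by simp
      ultimately show ?thesis using e1 e2 by simp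
    next
      case False
      have e1: "aff_transp n a b m = m" using False F unfolding aff_transp_def by simp
      have e2: "aff_transp n (u a) (u b) k = k" using False F ra rb unfolding aff_transp_def by simp
      show ?thesis using e1 e2 um by simp
    qed
  qed
  then show "(u \<circ> aff_transp n a b \<circ> inv u) k = aff_transp n (u a) (u b) k" using lhs by simp
qed

lemma at_unique:
  assumes "n > 0" "a < b" "a' < b'" "aff_transp n a b = aff_transp n a' b'"
  shows "\<exists>q. a' = a + int n * q \<and> b' = b + int n * q"
proof -
  have "aff_transp n a' b' a' = b'" unfolding aff_transp_def by simp
  then have e: "aff_transp n a b a' = b'" using assms(4) by simp
  show ?thesis
  proof (cases "a' mod int n = a mod int n")
    case True
    define q where "q = (a' - a) div int n"
    have "int n dvd a' - a" using True by (simp add: mod_eq_dvd_iff)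
    then have "a' = a + int n * q" unfolding q_def by simp
    moreover have "b' = a' - a + b" using e True unfolding aff_transp_def by simp
    ultimately show ?thesis by auto
  next
    case False
    then show ?thesis using e assms(2,3) unfolding aff_transp_def by (auto split: if_splits)
  qed
qed

lemma modrep_shift: "modrep n (x + int n * q) = modrep n x"
proof -
  have "x + int n * q - 1 = (x - 1) + int n * q" by simp
  then show ?thesis unfolding modrep_def by (simp only: mod_mult_self2)
qed

context S begin

lemma skip_refl_eq: "skip_refl n K (Suc t) = aff_transp n (U t (int t)) (U t (int t + 1))"
proof -
  define i where "i = int (t mod n)"
  define q where "q = int (t div n)"
  have tq: "int t = i + int n * q" unfolding i_def q_def
    by (metis mod_mult_div_eq of_nat_add of_nat_mult add.commute)
  have "skip_refl n K (Suc t) = U t \<circ> aff_transp n i (i + 1) \<circ> inv (U t)"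
    unfolding skip_refl_def by (simp add: sigma_eq i_def)
  also have "\<dots> = aff_transp n (U t i) (U t (i + 1))"
    by (rule conj_at[OF U_bij U_per i_ne])
  also have "\<dots> = aff_transp n (U t i + int n * q) (U t (i + 1) + int n * q)"
    by (rule at_shift[symmetric])
  also have "\<dots> = aff_transp n (U t (int t)) (U t (int t + 1))"
  proof -
    have "U t (int t) = U t i + int n * q" using tq U_perm by simp
    moreover have "U t (int t + 1) = U t (i + 1) + int n * q"
      using tq U_perm[of t "i + 1" q] by (simp add: algebra_simps)
    ultimately show ?thesis by simp
  qed
  finally show ?thesis .
qed

lemma R_ne_Q: "U t (int t) mod int n \<noteq> U t (int t + 1) mod int n"
  using U_res i_ne by blast

lemma neg_iff:
  assumes "Suc t \<in> K" "U t (int t) < U t (int t + 1)"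
  shows "neg_skip n K (Suc t) \<longleftrightarrow> modrep n (U t (int t + 1)) < modrep n (U t (int t))"
proof
  assume "neg_skip n K (Suc t)"
  then obtain a b where ab: "a < b" "skip_refl n K (Suc t) = aff_transp n a b"
      "modrep n b < modrep n a" unfolding neg_skip_def by blast
  obtain q where "a = U t (int t) + int n * q" "b = U t (int t + 1) + int n * q"
    using at_unique[of n "U t (int t)" "U t (int t + 1)" a b] assms(2) ab n2 skip_refl_eq by auto
  then show "modrep n (U t (int t + 1)) < modrep n (U t (int t))" using ab(3) by (simp add: modrep_shift)
next
  assume h: "modrep n (U t (int t + 1)) < modrep n (U t (int t))"
  have "1 \<le> modrep n x" "modrep n x \<le> int n" for x
  proof -
    have "0 < int n" using n2 by simp
    then have "(x - 1) mod int n < int n" "0 \<le> (x - 1) mod int n" by simp_all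
    then show "1 \<le> modrep n x" "modrep n x \<le> int n" unfolding modrep_def by simp_all
  qed
  then show "neg_skip n K (Suc t)" unfolding neg_skip_def using assms h R_ne_Q skip_refl_eq by blast
qed

end

context S begin

abbreviation d where "d \<equiv> int n - 1"
abbreviation NN where "NN \<equiv> n * (n - 1)"
definition g :: "int \<Rightarrow> int" where "g p = p + (p - 1) div d"

lemma d_pos: "d > 0" using n2 by simp

lemma NN_int: "int NN = int n * d" using n2 by (simp add: of_nat_diff)

lemma U_final: "U NN = id" using inS unfolding in_Sn_def by simp

lemma K_sub: "K \<subseteq> {1..NN}" using inS unfolding in_Sn_def by simp

lemma fin_K: "finite K" using K_sub finite_subset by blast

lemma div_add_d: "(x + d) div d = x div d + 1"
  using d_pos by simp

lemma same_win:
  assumes "a < p" "p \<le> a + d" "a < q" "q \<le> a + d" "q mod d = p mod d"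
  shows "q = p"
proof -
  have "d dvd q - p" using assms(5) by (simp add: mod_eq_dvd_iff)
  then obtain k where k: "q - p = d * k" by (auto elim: dvdE)
  have "k = 0"
  proof (rule ccontr)
    assume "k \<noteq> 0"
    then consider "k \<ge> 1" | "k \<le> -1" by linarith
    then show False
    proof cases
      case 1
      then have "d * k \<ge> d * 1" using d_pos by (intro mult_left_mono) auto
      then have "q - p \<ge> d" using k by simp
      then show False using assms by linarith
    next
      case 2
      then have "d * k \<le> d * (-1)" using d_pos by (intro mult_left_mono) auto
      then have "q - p \<le> - d" using k by simp
      then show False using assms by linarith
    qed
  qed
  then show ?thesis using k by simp
qed

lemma NT:
  assumes "t1 \<le> t2" "int t1 < p" "p \<le> int t1 + d"
    "int t2 < q" "q \<le> int t2 + d" "q mod d = p mod d"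
    "\<forall>j\<in>K. t1 < j \<and> j \<le> t2 \<longrightarrow> int j mod d \<noteq> p mod d"
  shows "U t2 q = U t1 p + (q - p) + (q - p) div d"
  using assms(1,4,5,6,7)
proof (induction t2 arbitrary: q rule: dec_induct)
  case base
  then have "q = p" using same_win[of "int t1" p q] assms(2,3) by simp
  then show ?case by simp
next
  case (step t)
  show ?case
  proof (cases "q \<le> int t + d")
    case True
    have IH: "U t q = U t1 p + (q - p) + (q - p) div d"
      using step.IH[of q] step.prems True by auto
    have "U (Suc t) q = U t q"
    proof (cases "Suc t \<in> K")
      case True then show ?thesis by (simp only: U_skip)
    next
      case False then show ?thesis using ns3[of t q] step.prems True by simp
    qed
    then show ?thesis using IH by simp
  next
    case False
    then have qe: "q = int t + int n" using step.prems by simp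
    have cls: "(int t + 1) mod d = p mod d"
    proof -
      have "(int t + 1) mod d = (int t + 1 + d) mod d" by (rule mod_add_self2[symmetric])
      also have "int t + 1 + d = q" using qe by simp
      finally show ?thesis using step.prems by simp
    qed
    have nk: "Suc t \<notin> K"
    proof
      assume "Suc t \<in> K"
      then have "int (Suc t) mod d \<noteq> p mod d" using step.prems(4) step.hyps by auto
      then show False using cls by (simp add: add.commute)
    qed
    have IH: "U t (int t + 1) = U t1 p + (int t + 1 - p) + (int t + 1 - p) div d"
      using step.IH[of "int t + 1"] step.prems cls n2 by auto
    have "U (Suc t) q = U t (int t + 1) + int n" using ns2[OF nk] qe by simp
    also have "\<dots> = U t1 p + (q - p) + (q - p) div d"
    proof -
      have e: "q - p = (int t + 1 - p) + d" using qe by simp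
      have "(q - p) div d = (int t + 1 - p) div d + 1" unfolding e by (rule div_add_d)
      then show ?thesis using IH qe by simp
    qed
    finally show ?thesis .
  qed
qed

end

context S begin

declare prefprod.simps(2)[simp del]

lemma int_nm1[simp]: "int (n - Suc 0) = int n - 1" using n2 by (simp add: of_nat_diff)

lemma Suc_int: "int (Suc t) = int t + 1" by simp

lemma divk: "0 \<le> r \<Longrightarrow> r < d \<Longrightarrow> (d * k + r) div d = k"
proof -
  assume "0 \<le> r" "r < d"
  then have "r div d = 0" by simp
  moreover have "(r + k * d) div d = k + r div d" using d_pos by simp
  ultimately show ?thesis by (simp add: algebra_simps)
qed

lemma g_mono: "x \<le> y \<Longrightarrow> g x \<le> g y"
  unfolding g_def using d_pos by (simp add: add_mono zdiv_mono1)

lemma g_step: "g x + 1 \<le> g (x + 1)"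
  unfolding g_def using d_pos by (simp add: zdiv_mono1)

lemma g_win: "g (x + int n) = g (x + 1) + int n"
proof -
  have e: "x + int n - 1 = x + d" by simp
  show ?thesis unfolding g_def e div_add_d by simp
qed

lemma U0: "U 0 = id" by simp

lemma FT:
  assumes "int t < p" "p \<le> int t + d" "\<forall>j\<in>K. j \<le> t \<longrightarrow> int j mod d \<noteq> p mod d"
  shows "U t p = g p"
proof -
  define p0 where "p0 = (p - 1) mod d + 1"
  have b: "0 \<le> (p - 1) mod d" "(p - 1) mod d < d" using d_pos by simp_all
  have pm: "p0 mod d = p mod d" unfolding p0_def by (simp add: mod_simps)
  have "U t p = U 0 p0 + (p - p0) + (p - p0) div d"
    using NT[of 0 t p0 p] assms b pm unfolding p0_def by auto
  moreover have "p - p0 = d * ((p - 1) div d)" unfolding p0_def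
    using div_mult_mod_eq[of "p - 1" d] by (simp add: algebra_simps)
  ultimately show ?thesis using d_pos unfolding g_def by simp
qed

lemma LT:
  assumes "t \<le> NN" "int t < p" "p \<le> int t + d" "\<forall>j\<in>K. t < j \<and> j \<le> NN \<longrightarrow> int j mod d \<noteq> p mod d"
  shows "U t p = g p - int n"
proof -
  define q where "q = int NN + (p - 1) mod d + 1"
  have b: "0 \<le> (p - 1) mod d" "(p - 1) mod d < d" using d_pos by simp_all
  have qm: "q mod d = p mod d"
  proof -
    have "q = ((p - 1) mod d + 1) + d * int n" unfolding q_def NN_int by (simp add: algebra_simps)
    then have "q mod d = ((p - 1) mod d + 1) mod d" by (simp only: mod_mult_self2)
    also have "\<dots> = p mod d" by (simp add: mod_simps)
    finally show ?thesis .
  qed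
  have "U NN q = U t p + (q - p) + (q - p) div d"
    using NT[of t NN p q] assms b qm unfolding q_def by auto
  moreover have "U NN q = q" using U_final by simp
  moreover have "q - p = d * (int n - (p - 1) div d)" unfolding q_def NN_int
    using div_mult_mod_eq[of "p - 1" d] by (simp add: algebra_simps)
  ultimately show ?thesis using d_pos unfolding g_def by simp
qed

lemma UP: "U t (int t) \<le> g (int t) + 1 \<and> (\<forall>p. int t < p \<and> p \<le> int t + d \<longrightarrow> U t p \<le> g p)"
proof (induction t)
  case 0
  have "(-1) div d = -1" using d_pos by (simp add: div_eq_minus1)
  then have "g 0 = -1" unfolding g_def by simp
  moreover have "p \<le> g p" if "0 < p" for p unfolding g_def using that d_pos by (simp add: pos_imp_zdiv_nonneg_iff)
  ultimately show ?case by simp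
next
  case (Suc t)
  have R: "U t (int t) \<le> g (int t) + 1" and W: "\<And>p. int t < p \<Longrightarrow> p \<le> int t + d \<Longrightarrow> U t p \<le> g p"
    using Suc by auto
  have gs: "g (int t) + 1 \<le> g (int t + 1)" by (rule g_step)
  show ?case
  proof (cases "Suc t \<in> K")
    case True
    have us: "U (Suc t) = U t" by (rule U_skip[OF True])
    have R': "U t (int t + 1) \<le> g (int t + 1)" using W[of "int t + 1"] n2 by simp
    have "U t p \<le> g p" if "int t + 1 < p" "p \<le> int t + 1 + d" for p
    proof (cases "p \<le> int t + d")
      case True then show ?thesis using W[of p] that by simp
    next
      case False
      then have pe: "p = int t + int n" using that by simp
      have "U t p = U t (int t) + int n" using U_per pe by simp
      also have "\<dots> \<le> g (int t + 1) + int n" using R gs by simp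
      also have "\<dots> = g p" using g_win pe by simp
      finally show ?thesis .
    qed
    moreover have e: "int (Suc t) = int t + 1" by simp
    ultimately show ?thesis unfolding us e using R' by simp
  next
    case False
    have "U (Suc t) p \<le> g p" if "int t + 1 < p" "p \<le> int t + 1 + d" for p
    proof (cases "p \<le> int t + d")
      case True then show ?thesis using W[of p] that ns3[OF False, of p] by simp
    next
      case F: False
      then have pe: "p = int t + int n" using that by simp
      have "U (Suc t) p = U t (int t + 1) + int n" using ns2[OF False] pe by simp
      also have "\<dots> \<le> g (int t + 1) + int n" using W[of "int t + 1"] n2 by simp
      also have "\<dots> = g p" using g_win pe by simp
      finally show ?thesis .
    qed
    moreover have "U (Suc t) (int (Suc t)) \<le> g (int (Suc t)) + 1"
      unfolding Suc_int using ns1[OF False] R gs by simp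
    ultimately show ?thesis by simp
  qed
qed

lemma LO:
  "t \<le> NN \<Longrightarrow> U t (int t) \<ge> int t + int t div d - int n + 1 - (if t = NN then 1 else 0)
     \<and> (\<forall>p. int t < p \<and> p \<le> int t + d \<longrightarrow> U t p \<ge> g p - int n)"
proof (induction "NN - t" arbitrary: t)
  case 0
  then have t: "t = NN" by simp
  have a: "int NN div d = int n" using divk[of 0 "int n"] d_pos unfolding NN_int by (simp add: mult.commute)
  have "(p - 1) div d = int n" if "int NN < p" "p \<le> int NN + d" for p
  proof -
    have h: "int n * d < p" "p \<le> int n * d + d" using that NN_int by simp_all
    have "p - 1 = d * int n + (p - 1 - int n * d)" by (simp add: algebra_simps)
    then show ?thesis using divk[of "p - 1 - int n * d" "int n"] h by simp
  qed
  then show ?case using t a U_final unfolding g_def by auto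
next
  case (Suc k)
  then have tl: "t < NN" by simp
  have k: "k = NN - Suc t" using Suc.hyps(2) by simp
  have e: "int (Suc t) = int t + 1" by simp
  note IH0 = Suc.hyps(1)[OF k, unfolded e]
  have IH: "U (Suc t) (int t + 1) \<ge> int t + 1 + (int t + 1) div d - int n + 1 - (if Suc t = NN then 1 else 0)"
    "\<And>p. int t + 1 < p \<Longrightarrow> p \<le> int t + 1 + d \<Longrightarrow> U (Suc t) p \<ge> g p - int n"
    using IH0 tl by auto
  have dm: "int t div d \<le> (int t + 1) div d" using d_pos by (simp add: zdiv_mono1)
  have IH': "U (Suc t) (int t + 1) \<ge> g (int t + 1) - int n"
    using IH(1) dm unfolding g_def by (simp split: if_splits)
  show ?case
  proof (cases "Suc t \<in> K")
    case True
    have us: "U (Suc t) = U t" by (rule U_skip[OF True])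
    have "U t (int t) + int n = U (Suc t) (int t + int n)" using us U_per by simp
    also have "\<dots> \<ge> g (int t + int n) - int n" using IH(2)[of "int t + int n"] n2 by simp
    finally have R: "U t (int t) \<ge> g (int t + 1) - int n" using g_win by simp
    have W: "U t p \<ge> g p - int n" if "int t < p" "p \<le> int t + d" for p
    proof (cases "p = int t + 1")
      case True then show ?thesis using IH' us by simp
    next
      case False then show ?thesis using IH(2)[of p] that us by simp
    qed
    show ?thesis using R W tl unfolding g_def by simp
  next
    case False
    have R: "U t (int t) = U (Suc t) (int t + 1)" using ns1[OF False] by simp
    have W: "U t p \<ge> g p - int n" if "int t < p" "p \<le> int t + d" for p
    proof (cases "p = int t + 1")
      case True
      have "U t (int t + 1) + int n = U (Suc t) (int t + int n)" using ns2[OF False] by simp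
      also have "\<dots> \<ge> g (int t + int n) - int n" using IH(2)[of "int t + int n"] n2 by simp
      finally show ?thesis using g_win True by simp
    next
      case F: False then show ?thesis using IH(2)[of p] that ns3[OF False, of p] by simp
    qed
    show ?thesis using R W tl IH(1) dm by (simp split: if_splits)
  qed
qed

end

context S begin

lemma col_eq:
  assumes "1 \<le> j" "1 \<le> j'"
  shows "col_of n j = col_of n j' \<longleftrightarrow> int j mod d = int j' mod d"
proof -
  have a: "int ((x - 1) mod (n - 1)) = (int x - 1) mod d" if "1 \<le> x" for x
  proof -
    have "int (x - 1) = int x - 1" using that by simp
    then show ?thesis by (simp add: of_nat_mod)
  qed
  have "col_of n j = col_of n j' \<longleftrightarrow> (j - 1) mod (n - 1) = (j' - 1) mod (n - 1)"
    unfolding col_of_def by simp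
  also have "\<dots> \<longleftrightarrow> (int j - 1) mod d = (int j' - 1) mod d"
    using a[of j] a[of j'] assms by (metis of_nat_eq_iff)
  also have "\<dots> \<longleftrightarrow> int j mod d = int j' mod d"
    by (simp add: mod_eq_dvd_iff)
  finally show ?thesis .
qed

lemma col_range: "1 \<le> col_of n j \<and> col_of n j \<le> n - 1"
proof -
  have "(j - 1) mod (n - 1) < n - 1" using n2 by simp
  then show ?thesis unfolding col_of_def by simp
qed

lemma g_add: "g (x + d * k) = g x + int n * k"
proof -
  have "(x + d * k - 1) div d = ((x - 1) + k * d) div d" by (simp add: algebra_simps)
  also have "\<dots> = k + (x - 1) div d" using d_pos by simp
  finally show ?thesis unfolding g_def by (simp add: algebra_simps)
qed

lemma touch_ge2: "2 \<le> card {j \<in> K. int j mod d = p mod d}"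
proof (rule ccontr)
  define T where "T = {j \<in> K. int j mod d = p mod d}"
  have fT: "finite T" unfolding T_def using fin_K by simp
  assume "\<not> 2 \<le> card {j \<in> K. int j mod d = p mod d}"
  then have "card T \<le> Suc 0" unfolding T_def by simp
  then have all: "\<forall>a\<in>T. \<forall>b\<in>T. a = b" using card_le_Suc0_iff_eq[OF fT] by simp
  show False
  proof (cases "T = {}")
    case True
    define q where "q = int NN + (p - 1) mod d + 1"
    have b: "0 \<le> (p - 1) mod d" "(p - 1) mod d < d" using d_pos by simp_all
    have qm: "q mod d = p mod d"
    proof -
      have "q = ((p - 1) mod d + 1) + d * int n" unfolding q_def NN_int by (simp add: algebra_simps)
      then have "q mod d = ((p - 1) mod d + 1) mod d" by (simp only: mod_mult_self2)
      also have "\<dots> = p mod d" by (simp add: mod_simps)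
      finally show ?thesis .
    qed
    have "U NN q = g q"
      using FT[of NN q] b qm True unfolding T_def q_def by auto
    moreover have "U NN q = q" using U_final by simp
    moreover have "(q - 1) div d = int n"
    proof -
      have "q - 1 = d * int n + (p - 1) mod d" unfolding q_def NN_int by (simp add: algebra_simps)
      then show ?thesis using divk[of "(p - 1) mod d" "int n"] b by simp
    qed
    ultimately show False unfolding g_def using n2 by simp
  next
    case False
    then obtain j where jT: "j \<in> T" by blast
    then have jK: "j \<in> K" and jc: "int j mod d = p mod d" unfolding T_def by auto
    then have "1 \<le> j" "j \<le> NN" using K_sub by auto
    then obtain t where jt: "j = Suc t" and tl: "t < NN" by (cases j) auto
    have cls: "(int t + 1) mod d = p mod d" using jc jt by (simp add: add.commute)
    have only: "\<And>j'. j' \<in> K \<Longrightarrow> int j' mod d = p mod d \<Longrightarrow> j' = j"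
      using all jT unfolding T_def by blast
    have Q: "U t (int t + 1) = g (int t + 1)"
    proof (rule FT)
      show "int t < int t + 1" by simp
      show "int t + 1 \<le> int t + d" using n2 by simp
      show "\<forall>j\<in>K. j \<le> t \<longrightarrow> int j mod d \<noteq> (int t + 1) mod d"
        using only cls jt by fastforce
    qed
    have c2: "(int t + int n) mod d = p mod d"
    proof -
      have "(int t + int n) mod d = (int t + 1 + d) mod d" by simp
      also have "\<dots> = (int t + 1) mod d" by (rule mod_add_self2)
      finally show ?thesis using cls by simp
    qed
    have "U (Suc t) (int t + int n) = g (int t + int n) - int n"
    proof (rule LT)
      show "Suc t \<le> NN" using tl by simp
      show "int (Suc t) < int t + int n" using n2 by simp
      show "int t + int n \<le> int (Suc t) + d" by simp
      show "\<forall>j\<in>K. Suc t < j \<and> j \<le> NN \<longrightarrow> int j mod d \<noteq> (int t + int n) mod d"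
        using only c2 jt by fastforce
    qed
    then have "U t (int t + int n) = g (int t + 1)" using U_skip jK jt g_win by simp
    then have "U t (int t + int n) = U t (int t + 1)" using Q by simp
    then have "int t + int n = int t + 1" using U_bij[of t] by (simp add: bij_def inj_eq)
    then show False using n2 by simp
  qed
qed

end

context S begin

lemma tn_mod: "(int t + int n) mod d = (int t + 1) mod d"
proof -
  have "(int t + int n) mod d = (int t + 1 + d) mod d" by simp
  also have "\<dots> = (int t + 1) mod d" by (rule mod_add_self2)
  finally show ?thesis .
qed

lemma K_ge1: "j \<in> K \<Longrightarrow> 1 \<le> j \<and> j \<le> NN" using K_sub by auto

lemma card2: assumes "c \<in> {1..n - 1}" shows "card {j \<in> K. col_of n j = c} = 2"
proof -
  define A where "A c = {j \<in> K. col_of n j = c}" for c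
  have colc: "col_of n c = c" if "c \<in> {1..n - 1}" for c
    using that unfolding col_of_def by auto
  have ge: "2 \<le> card (A c)" if "c \<in> {1..n - 1}" for c
  proof -
    have "A c = {j \<in> K. int j mod d = int c mod d}"
      unfolding A_def using col_eq[of _ c] colc[OF that] that K_ge1 by force
    then show ?thesis using touch_ge2 by simp
  qed
  have KU: "K = (\<Union>c\<in>{1..n - 1}. A c)" unfolding A_def using col_range by auto
  have "card K = (\<Sum>c\<in>{1..n - 1}. card (A c))"
    unfolding KU by (rule card_UN_disjoint) (auto simp: A_def fin_K)
  moreover have "card K = 2 * n - 2" using inS unfolding in_Sn_def by simp
  ultimately have s: "(\<Sum>c\<in>{1..n - 1}. card (A c)) = (\<Sum>c\<in>{1..n - 1}. 2)" using n2 by simp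
  show ?thesis
  proof (rule ccontr)
    assume "card {j \<in> K. col_of n j = c} \<noteq> 2"
    then have "2 < card (A c)" using ge[OF assms] unfolding A_def by simp
    then have "(\<Sum>c\<in>{1..n - 1}. 2) < (\<Sum>c\<in>{1..n - 1}. card (A c))"
      using ge assms by (intro sum_strict_mono_ex1) auto
    then show False using s by simp
  qed
qed

lemma in_cls: "j \<in> K \<Longrightarrow> col_of n j = col_of n (Suc t) \<longleftrightarrow> int j mod d = (int t + 1) mod d"
  using col_eq[of j "Suc t"] K_ge1 by (simp add: add.commute)

lemma M2:
  assumes sk: "Suc t \<in> K"
  shows "U t (int t) < U t (int t + 1)"
proof -
  define T where "T = {j \<in> K. col_of n j = col_of n (Suc t)}"
  have "card T = 2" unfolding T_def using card2 col_range by auto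
  then obtain x y where xy: "T = {x, y}" "x \<noteq> y" by (auto simp: card_2_iff)
  have sT: "Suc t \<in> T" unfolding T_def using sk by simp
  obtain j' where j': "j' \<in> T" "j' \<noteq> Suc t" "\<And>z. z \<in> T \<Longrightarrow> z = Suc t \<or> z = j'"
    using xy sT by (metis insert_iff singletonD)
  have j'K: "j' \<in> K" using j' unfolding T_def by simp
  have tl: "t < NN" using K_ge1[OF sk] by simp
  have oth: "\<And>z. z \<in> K \<Longrightarrow> int z mod d = (int t + 1) mod d \<Longrightarrow> z = Suc t \<or> z = j'"
    using j'(3) in_cls unfolding T_def by blast
  have ne: "U t (int t) \<noteq> U t (int t + 1)" using R_ne_Q by metis
  show ?thesis
  proof (cases "j' > Suc t")
    case True
    have Q: "U t (int t + 1) = g (int t + 1)"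
    proof (rule FT)
      show "int t < int t + 1" by simp
      show "int t + 1 \<le> int t + d" using n2 by simp
      show "\<forall>j\<in>K. j \<le> t \<longrightarrow> int j mod d \<noteq> (int t + 1) mod d"
        using oth True by fastforce
    qed
    have "U t (int t) \<le> g (int t) + 1" using UP by blast
    also have "\<dots> \<le> g (int t + 1)" by (rule g_step)
    finally show ?thesis using Q ne by simp
  next
    case False
    then have jl: "j' < Suc t" using j'(2) by simp
    have "U (Suc t) (int t + int n) = g (int t + int n) - int n"
    proof (rule LT)
      show "Suc t \<le> NN" using tl by simp
      show "int (Suc t) < int t + int n" using n2 by simp
      show "int t + int n \<le> int (Suc t) + d" by simp
      show "\<forall>j\<in>K. Suc t < j \<and> j \<le> NN \<longrightarrow> int j mod d \<noteq> (int t + int n) mod d"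
        using oth jl tn_mod by fastforce
    qed
    then have R: "U t (int t) = g (int t + 1) - int n"
      using U_skip[OF sk] U_per[of t "int t"] g_win by simp
    have "U t (int t + 1) \<ge> g (int t + 1) - int n" using LO[of t] tl n2 by simp
    then show ?thesis using R ne by simp
  qed
qed

end

context S begin

lemma modrep_inj: "modrep n x = modrep n y \<Longrightarrow> x mod int n = y mod int n"
  unfolding modrep_def by (simp add: mod_eq_dvd_iff)

lemma modrep_block:
  assumes "int n * w < x" "x \<le> int n * w + int n"
  shows "modrep n x = x - int n * w"
proof -
  have "(x - 1) mod int n = ((x - 1 - int n * w) + int n * w) mod int n" by simp
  also have "\<dots> = (x - 1 - int n * w) mod int n" by (rule mod_mult_self2)
  also have "\<dots> = x - 1 - int n * w" using assms by (intro mod_pos_pos_trivial) auto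
  finally show ?thesis unfolding modrep_def by simp
qed

lemma col_neg:
  assumes c: "c \<in> {1..n - 1}"
  shows "card {j \<in> {1..NN}. neg_skip n K j \<and> col_of n j = c} = 1"
proof -
  define A where "A = {j \<in> K. col_of n j = c}"
  have "card A = 2" unfolding A_def using card2[OF c] .
  then obtain x y where xy: "A = {x, y}" "x \<noteq> y" by (auto simp: card_2_iff)
  obtain j1 j2 where jj: "A = {j1, j2}" "j1 < j2"
  proof (cases "x < y")
    case True then show ?thesis using that xy by blast
  next
    case False then show ?thesis using that[of y x] xy by (auto simp: insert_commute)
  qed
  have j1K: "j1 \<in> K" "col_of n j1 = c" and j2K: "j2 \<in> K" "col_of n j2 = c"
    using jj unfolding A_def by auto
  obtain t1 where t1: "j1 = Suc t1" using K_ge1[OF j1K(1)] by (cases j1) auto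
  obtain t2 where t2: "j2 = Suc t2" using K_ge1[OF j2K(1)] by (cases j2) auto
  have t12: "t1 < t2" using jj t1 t2 by simp
  have t2l: "t2 < NN" using K_ge1[OF j2K(1)] t2 by simp
  have oth: "\<And>z. z \<in> K \<Longrightarrow> col_of n z = c \<Longrightarrow> z = j1 \<or> z = j2"
    using jj unfolding A_def by blast
  have cl1: "\<And>z. z \<in> K \<Longrightarrow> int z mod d = (int t1 + 1) mod d \<Longrightarrow> col_of n z = c"
    using in_cls j1K t1 by metis
  have cl2: "\<And>z. z \<in> K \<Longrightarrow> int z mod d = (int t2 + 1) mod d \<Longrightarrow> col_of n z = c"
    using in_cls j2K t2 by metis
  have m12: "(int t2 + 1) mod d = (int t1 + 1) mod d"
    using in_cls[OF j2K(1), of t1] j1K j2K t1 t2 by (simp add: add.commute)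
  define R1 where "R1 = U t1 (int t1)"
  define Q1 where "Q1 = U t1 (int t1 + 1)"
  define R2 where "R2 = U t2 (int t2)"
  define Q2 where "Q2 = U t2 (int t2 + 1)"
  have Q1: "Q1 = g (int t1 + 1)" unfolding Q1_def
  proof (rule FT)
    show "int t1 < int t1 + 1" by simp
    show "int t1 + 1 \<le> int t1 + d" using n2 by simp
    show "\<forall>j\<in>K. j \<le> t1 \<longrightarrow> int j mod d \<noteq> (int t1 + 1) mod d"
      using oth cl1 jj t1 t2 by fastforce
  qed
  have "U (Suc t2) (int t2 + int n) = g (int t2 + int n) - int n"
  proof (rule LT)
    show "Suc t2 \<le> NN" using t2l by simp
    show "int (Suc t2) < int t2 + int n" using n2 by simp
    show "int t2 + int n \<le> int (Suc t2) + d" by simp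
    show "\<forall>j\<in>K. Suc t2 < j \<and> j \<le> NN \<longrightarrow> int j mod d \<noteq> (int t2 + int n) mod d"
      using oth cl2 tn_mod jj t1 t2 by fastforce
  qed
  then have R2: "R2 = g (int t2 + 1) - int n" unfolding R2_def
    using U_skip j2K t2 U_per[of t2 "int t2"] g_win by simp
  have nt: "U t2 (int t2 + 1) = U (Suc t1) (int t1 + int n) + ((int t2 + 1) - (int t1 + int n))
        + ((int t2 + 1) - (int t1 + int n)) div d"
  proof (rule NT)
    show "Suc t1 \<le> t2" using t12 by simp
    show "int (Suc t1) < int t1 + int n" using n2 by simp
    show "int t1 + int n \<le> int (Suc t1) + d" by simp
    show "int t2 < int t2 + 1" by simp
    show "int t2 + 1 \<le> int t2 + d" using n2 by simp
    show "(int t2 + 1) mod d = (int t1 + int n) mod d" using m12 tn_mod by simp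
    show "\<forall>j\<in>K. Suc t1 < j \<and> j \<le> t2 \<longrightarrow> int j mod d \<noteq> (int t1 + int n) mod d"
      using oth cl1 tn_mod jj t1 t2 by fastforce
  qed
  have u1: "U (Suc t1) (int t1 + int n) = R1 + int n"
    unfolding R1_def using U_skip j1K t1 U_per[of t1 "int t1"] by simp
  obtain k where k: "(int t2 + 1) - (int t1 + int n) = d * k"
  proof -
    have a: "d dvd (int t2 + 1) - (int t1 + 1)" using m12 by (simp only: mod_eq_dvd_iff)
    have e: "(int t2 + 1) - (int t1 + int n) = ((int t2 + 1) - (int t1 + 1)) - d" by simp
    have "d dvd (int t2 + 1) - (int t1 + int n)" unfolding e by (rule dvd_diff[OF a dvd_refl])
    then show ?thesis using that by (auto elim: dvdE)
  qed
  have dk: "(d * k) div d = k" using d_pos by simp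
  have "Q2 = (R1 + int n) + d * k + k" unfolding Q2_def nt u1 k dk by simp
  then have "Q2 = R1 + int n * (k + 1)" by (simp add: algebra_simps)
  then have mQ2: "modrep n Q2 = modrep n R1" by (simp add: modrep_shift)
  obtain k2 where k2: "int t2 + 1 = (int t1 + 1) + d * k2"
  proof -
    have "d dvd (int t2 + 1) - (int t1 + 1)" using m12 by (simp add: mod_eq_dvd_iff)
    then obtain k2 where "(int t2 + 1) - (int t1 + 1) = d * k2" by (auto elim: dvdE)
    then show ?thesis using that[of k2] by simp
  qed
  have "R2 = Q1 + int n * (k2 - 1)" unfolding R2 Q1 k2 g_add by (simp add: algebra_simps)
  then have mR2: "modrep n R2 = modrep n Q1" by (simp add: modrep_shift)
  have ne: "modrep n R1 \<noteq> modrep n Q1"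
    using modrep_inj R_ne_Q unfolding R1_def Q1_def by metis
  have n1: "neg_skip n K j1 \<longleftrightarrow> modrep n Q1 < modrep n R1"
    unfolding R1_def Q1_def t1 using neg_iff M2 j1K t1 by simp
  have n2': "neg_skip n K j2 \<longleftrightarrow> modrep n R1 < modrep n Q1"
    using neg_iff[of t2] M2[of t2] j2K t2 mQ2 mR2 unfolding R2_def Q2_def by simp
  have S: "{j \<in> {1..NN}. neg_skip n K j \<and> col_of n j = c} = {j \<in> {j1, j2}. neg_skip n K j}"
  proof
    show "{j \<in> {1..NN}. neg_skip n K j \<and> col_of n j = c} \<subseteq> {j \<in> {j1, j2}. neg_skip n K j}"
      using oth unfolding neg_skip_def by blast
    show "{j \<in> {j1, j2}. neg_skip n K j} \<subseteq> {j \<in> {1..NN}. neg_skip n K j \<and> col_of n j = c}"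
      using j1K j2K K_ge1 by auto
  qed
  show ?thesis
  proof (cases "modrep n Q1 < modrep n R1")
    case True
    then have "{j \<in> {j1, j2}. neg_skip n K j} = {j1}" using n1 n2' jj by auto
    then show ?thesis using S by simp
  next
    case False
    then have "{j \<in> {j1, j2}. neg_skip n K j} = {j2}" using n1 n2' jj ne by auto
    then show ?thesis using S by simp
  qed
qed

end

context S begin

lemma row_eq:
  assumes "1 \<le> j" shows "row_of n j = (j - 1) div (n - 1) + 1"
proof -
  define m where "m = n - 1"
  define v where "v = (j - 1) div m"
  have m0: "0 < m" unfolding m_def using n2 by simp
  have j: "j = m * v + (j - 1) mod m + 1" unfolding v_def using assms by simp
  have "(j - 1) mod m < m" using m0 by simp
  then have lo: "m * v < j" and hi: "j \<le> m * v + m" using j by linarith+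
  have rlo: "real v < real j / real m"
  proof -
    have "real (m * v) < real j" using lo by (simp only: of_nat_less_iff)
    then have "real v * real m < real j" by (simp add: mult.commute)
    then show ?thesis using m0 by (simp add: pos_less_divide_eq)
  qed
  have rhi: "real j / real m \<le> real v + 1"
  proof -
    have "real j \<le> real (m * v + m)" using hi by (simp only: of_nat_le_iff)
    also have "\<dots> = (real v + 1) * real m" by (simp add: algebra_simps)
    finally have "real j \<le> (real v + 1) * real m" .
    then show ?thesis using m0 by (simp add: divide_le_eq)
  qed
  have "\<lceil>real j / real m\<rceil> = int v + 1"
    by (rule ceiling_unique) (use rlo rhi in simp_all)
  then show ?thesis unfolding row_of_def m_def[symmetric] v_def by simp
qed

lemma R_mono: "t \<le> t' \<Longrightarrow> t' \<le> NN \<Longrightarrow> U t (int t) \<le> U t' (int t')"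
proof (induction t' rule: dec_induct)
  case base then show ?case by simp
next
  case (step s)
  have "U s (int s) \<le> U (Suc s) (int (Suc s))"
  proof (cases "Suc s \<in> K")
    case True
    then show ?thesis unfolding Suc_int U_skip[OF True] using M2[OF True] by simp
  next
    case False
    then show ?thesis unfolding Suc_int using ns1[OF False] by simp
  qed
  then show ?case using step by simp
qed

lemma neg_cross:
  assumes ng: "neg_skip n K (Suc t)"
  shows "U t (int t) \<le> int n * (int t div d) \<and> int n * (int t div d) < U t (int t + 1)"
proof -
  have sk: "Suc t \<in> K" using ng unfolding neg_skip_def by simp
  have tl: "t < NN" using K_ge1[OF sk] by simp
  define v where "v = int t div d"
  define R where "R = U t (int t)"
  define Q where "Q = U t (int t + 1)"
  have e: "d * v + int t mod d = int t" unfolding v_def by (rule mult_div_mod_eq)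
  have "0 \<le> int t mod d" "int t mod d < d" using d_pos by simp_all
  then have dv: "d * v \<le> int t" "int t < d * v + d" using e by linarith+
  have Rl: "R \<ge> int t + v - int n + 1" unfolding R_def v_def using LO[of t] tl by simp
  have Qh: "Q \<le> int t + 1 + v"
  proof -
    have "Q \<le> g (int t + 1)" unfolding Q_def using UP[of t] n2 by simp
    then show ?thesis unfolding g_def v_def by simp
  qed
  have RQ: "R < Q" unfolding R_def Q_def by (rule M2[OF sk])
  have nm: "modrep n Q < modrep n R" using neg_iff[OF sk] RQ ng unfolding R_def Q_def by simp
  have Rl': "int n * (v - 1) < R" using Rl dv by (simp add: algebra_simps)
  have Qh': "Q \<le> int n * v + int n" using Qh dv by (simp add: algebra_simps)
  have c1: "\<not> Q \<le> int n * v"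
  proof
    assume "Q \<le> int n * v"
    then have "modrep n Q = Q - int n * (v - 1)" "modrep n R = R - int n * (v - 1)"
      using modrep_block[of "v - 1" Q] modrep_block[of "v - 1" R] Rl' RQ by (simp_all add: algebra_simps)
    then show False using nm RQ by simp
  qed
  have c2: "\<not> R > int n * v"
  proof
    assume "R > int n * v"
    then have "modrep n Q = Q - int n * v" "modrep n R = R - int n * v"
      using modrep_block[of v Q] modrep_block[of v R] Qh' RQ by simp_all
    then show False using nm RQ by simp
  qed
  show ?thesis using c1 c2 unfolding R_def Q_def v_def by simp
qed

end

context S begin

lemma neg_K: "neg_skip n K j \<Longrightarrow> j \<in> K" unfolding neg_skip_def by simp

lemma row_le1: "card {j \<in> {1..NN}. neg_skip n K j \<and> row_of n j = v + 1} \<le> 1"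
proof -
  define A where "A = {j \<in> {1..NN}. neg_skip n K j \<and> row_of n j = v + 1}"
  have key: False if jA: "j \<in> A" and jA': "j' \<in> A" and lt: "j < j'" for j j'
  proof -
    obtain t where t: "j = Suc t" using jA unfolding A_def by (cases j) auto
    obtain t' where t': "j' = Suc t'" using jA' unfolding A_def by (cases j') auto
    have rv: "t div (n - 1) = v" using jA row_eq[of j] unfolding A_def t by simp
    have rv': "t' div (n - 1) = v" using jA' row_eq[of j'] unfolding A_def t' by simp
    have iv: "int t div d = int v" using rv by (metis int_nm1 of_nat_div One_nat_def)
    have iv': "int t' div d = int v" using rv' by (metis int_nm1 of_nat_div One_nat_def)
    have ng: "neg_skip n K (Suc t)" "neg_skip n K (Suc t')" using jA jA' t t' unfolding A_def by auto
    have sk: "Suc t \<in> K" using neg_K ng by simp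
    have a: "int n * int v < U t (int t + 1)" using neg_cross[OF ng(1)] iv by simp
    have b: "U t' (int t') \<le> int n * int v" using neg_cross[OF ng(2)] iv' by simp
    have tl': "t' \<le> NN" using K_ge1[OF neg_K[OF ng(2)]] by simp
    have "U (Suc t) (int (Suc t)) \<le> U t' (int t')" using R_mono[of "Suc t" t'] lt t t' tl' by simp
    moreover have "U (Suc t) (int (Suc t)) = U t (int t + 1)" unfolding Suc_int U_skip[OF sk] by simp
    ultimately show False using a b by simp
  qed
  have "finite A" unfolding A_def by simp
  moreover have "\<forall>a\<in>A. \<forall>b\<in>A. a = b" using key by (metis linorder_neqE_nat)
  ultimately have "card A \<le> Suc 0" using card_le_Suc0_iff_eq by blast
  then show ?thesis unfolding A_def by simp
qed

lemma row_last: "{j \<in> {1..NN}. neg_skip n K j \<and> row_of n j = n} = {}"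
proof (rule ccontr)
  assume "{j \<in> {1..NN}. neg_skip n K j \<and> row_of n j = n} \<noteq> {}"
  then obtain j where j: "j \<in> {1..NN}" "neg_skip n K j" "row_of n j = n" by blast
  obtain t where t: "j = Suc t" using j(1) by (cases j) auto
  have "t div (n - 1) + 1 = n" using j(3) row_eq[of j] t by simp
  then have rv: "t div (n - 1) = n - 1" by simp
  have iv: "int t div d = d" using rv by (metis int_nm1 of_nat_div One_nat_def)
  have sk: "Suc t \<in> K" using neg_K j t by simp
  have a: "int n * d < U t (int t + 1)" using neg_cross[of t] j t iv by simp
  have "U (Suc t) (int (Suc t)) \<le> U NN (int NN)" using R_mono[of "Suc t" NN] j t by simp
  moreover have "U (Suc t) (int (Suc t)) = U t (int t + 1)" unfolding Suc_int U_skip[OF sk] by simp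
  moreover have "U NN (int NN) = int n * d" using U_final NN_int by simp
  ultimately show False using a by simp
qed

lemma row_range: "j \<in> {1..NN} \<Longrightarrow> row_of n j \<in> {1..n}"
proof -
  assume j: "j \<in> {1..NN}"
  have "j - 1 \<le> NN - 1" using j by auto
  then have "(j - 1) div (n - 1) \<le> (NN - 1) div (n - 1)" by (rule div_le_mono)
  also have "(NN - 1) div (n - 1) < n"
  proof -
    have "NN - 1 < n * (n - 1)" using n2 by simp
    then show ?thesis using n2 by (simp add: div_less_iff_less_mult mult.commute)
  qed
  finally show ?thesis using row_eq[of j] j by simp
qed

lemma main:
  "(\<forall>c\<in>{1..n - 1}. card {j \<in> {1..n * (n - 1)}. neg_skip n K j \<and> col_of n j = c} = 1)
   \<and> (\<forall>r\<in>{1..n - 1}. card {j \<in> {1..n * (n - 1)}. neg_skip n K j \<and> row_of n j = r} = 1)"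
proof
  show "\<forall>c\<in>{1..n - 1}. card {j \<in> {1..n * (n - 1)}. neg_skip n K j \<and> col_of n j = c} = 1"
    using col_neg by blast
  define NEG where "NEG = {j \<in> {1..NN}. neg_skip n K j}"
  define C where "C c = {j \<in> {1..NN}. neg_skip n K j \<and> col_of n j = c}" for c
  define Rw where "Rw r = {j \<in> {1..NN}. neg_skip n K j \<and> row_of n j = r}" for r
  have "NEG = (\<Union>c\<in>{1..n - 1}. C c)" unfolding NEG_def C_def using col_range by auto
  then have "card NEG = (\<Sum>c\<in>{1..n - 1}. card (C c))"
    by (simp only:) (rule card_UN_disjoint, auto simp: C_def)
  also have "\<dots> = (\<Sum>c\<in>{1..n - 1}. 1)" using col_neg unfolding C_def by simp
  finally have cN: "card NEG = n - 1" by simp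
  have "NEG = (\<Union>r\<in>{1..n}. Rw r)" unfolding NEG_def Rw_def using row_range by auto
  then have "card NEG = (\<Sum>r\<in>{1..n}. card (Rw r))"
    by (simp only:) (rule card_UN_disjoint, auto simp: Rw_def)
  also have "\<dots> = (\<Sum>r\<in>{1..n - 1}. card (Rw r)) + card (Rw n)"
  proof -
    have "{1..n} = insert n {1..n - 1}" using n2 by auto
    moreover have "n \<notin> {1..n - 1}" using n2 by simp
    ultimately show ?thesis using sum.insert[of "{1..n - 1}" n "\<lambda>r. card (Rw r)"] by (simp add: add.commute)
  qed
  also have "card (Rw n) = 0" unfolding Rw_def using row_last by simp
  finally have s: "(\<Sum>r\<in>{1..n - 1}. card (Rw r)) = (\<Sum>r\<in>{1..n - 1}. 1)" using cN by simp
  have le: "card (Rw r) \<le> 1" if "r \<in> {1..n - 1}" for r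
    using row_le1[of "r - 1"] that unfolding Rw_def by simp
  show "\<forall>r\<in>{1..n - 1}. card {j \<in> {1..n * (n - 1)}. neg_skip n K j \<and> row_of n j = r} = 1"
  proof
    fix r assume r: "r \<in> {1..n - 1}"
    show "card {j \<in> {1..n * (n - 1)}. neg_skip n K j \<and> row_of n j = r} = 1"
    proof (rule ccontr)
      assume "card {j \<in> {1..n * (n - 1)}. neg_skip n K j \<and> row_of n j = r} \<noteq> 1"
      then have "card (Rw r) \<noteq> 1" unfolding Rw_def by simp
      then have "card (Rw r) < 1" using le[OF r] by linarith
      then have "(\<Sum>r\<in>{1..n - 1}. card (Rw r)) < (\<Sum>r\<in>{1..n - 1}. 1)"
        using le r by (intro sum_strict_mono_ex1) auto
      then show False using s by simp
    qed
  qed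
qed

end

theorem proposition8p3:
  fixes n :: nat and K :: "nat set"
  assumes "n \<ge> 2" and "in_Sn n K"
  shows "(\<forall>c\<in>{1..n - 1}. card {j \<in> {1..n * (n - 1)}. neg_skip n K j \<and> col_of n j = c} = 1)
       \<and> (\<forall>r\<in>{1..n - 1}. card {j \<in> {1..n * (n - 1)}. neg_skip n K j \<and> row_of n j = r} = 1)"
proof -
  interpret S n K using assms by unfold_locales
  show ?thesis by (rule main)
qed

end
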